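(* Let $N\ge 1$, let $\mathbf{A}=(A_{ij})\in\mathbb{R}^{N\times N}$ with $A_{ij}\ge 0$ for $i\neq j$ and $A_{ii}=0$, let $D_i=\sum_{j=1}^N A_{ij}$, $\mathbf{D}=\operatorname{diag}(D_1,\dots,D_N)$, let $\beta_1,\dots,\beta_N>0$, and set $\mathbf{H}=\mathbf{A}-\mathbf{D}-\operatorname{diag}(\beta_1,\dots,\beta_N)$. Then for all $k,m\in\{1,\dots,N\}$ and every positive integer $p$: $[\mathbf{H}^{-p}]_{km}\ge 0$ if $p$ is even and $[\mathbf{H}^{-p}]_{km}\le 0$ if $p$ is odd. Moreover, if $[\mathbf{H}^{-p}]_{km}=0$, then node $k$ cannot be reached from node $m$, i.e. there is no directed walk $m=w_0,w_1,\dots,w_n=k$ with $A_{w_{t+1}w_t}>0$ for all $t$.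
   Context: The directed graph associated with $\mathbf{A}$ has an edge from node $j$ to node $i$ iff $A_{ij}>0$. $\mathbf{H}$ is strictly diagonally dominant with negative diagonal, hence invertible. *)

theory Defs
  imports "HOL-Analysis.Analysis"
begin

(* matrix power w.r.t. matrix multiplication ** (note: ^ on vec is componentwise) *)
fun matpow :: "real^'n^'n \<Rightarrow> nat \<Rightarrow> real^'n^'n" where
  "matpow M 0 = mat 1"
| "matpow M (Suc p) = M ** matpow M p"

definition diagm :: "real^'n \<Rightarrow> real^'n^'n" where
  "diagm v = (\<chi> i j. if i = j then v $ i else 0)"

definition reachable :: "real^'n^'n \<Rightarrow> 'n \<Rightarrow> 'n \<Rightarrow> bool" where
  "reachable A m k \<longleftrightarrow> (\<exists>ws. ws \<noteq> [] \<and> hd ws = m \<and> last ws = k \<and>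
      (\<forall>t. Suc t < length ws \<longrightarrow> A $ (ws ! Suc t) $ (ws ! t) > 0))"

end

theory Submission
  imports Defs
begin

lemma minpos:
  fixes A :: "real^'n^'n" and c :: "'n \<Rightarrow> real" and x :: "'n \<Rightarrow> real"
  assumes nn: "\<And>i j. A $ i $ j \<ge> 0"
    and c: "\<And>i. c i > (\<Sum>j\<in>UNIV. A $ i $ j)"
    and h: "\<And>i. c i * x i - (\<Sum>j\<in>UNIV. A $ i $ j * x j) \<ge> 0"
  shows "x i \<ge> 0"
proof -
  have "\<exists>i0. \<forall>i. x i0 \<le> x i"
  proof -
    have f: "finite (range x)" by simp
    have "Min (range x) \<in> range x" by (rule Min_in) auto
    then obtain i0 where i0: "x i0 = Min (range x)" by (metis imageE)
    show ?thesis using f i0 by (metis Min_le rangeI)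
  qed
  then obtain i0 where i0: "\<And>i. x i0 \<le> x i" by blast
  have "(\<Sum>j\<in>UNIV. A $ i0 $ j * x i0) \<le> (\<Sum>j\<in>UNIV. A $ i0 $ j * x j)"
    by (rule sum_mono) (simp add: i0 mult_left_mono nn)
  hence "(\<Sum>j\<in>UNIV. A $ i0 $ j) * x i0 \<le> c i0 * x i0"
    using h[of i0] by (simp add: sum_distrib_right)
  hence "(c i0 - (\<Sum>j\<in>UNIV. A $ i0 $ j)) * x i0 \<ge> 0" by (simp add: algebra_simps)
  hence "x i0 \<ge> 0" using c[of i0] by (simp add: zero_le_mult_iff)
  thus ?thesis using i0[of i] by linarith
qed

lemma matpow_neg: "matpow (- X) p = ((-1::real)^p) *\<^sub>R matpow X p"
proof (induction p)
  case 0 thus ?case by simp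
next
  case (Suc p)
  have "matpow (- X) (Suc p) = ((-1::real) *\<^sub>R X) ** (((-1::real)^p) *\<^sub>R matpow X p)"
    using Suc by simp
  also have "\<dots> = (((-1::real)^p) * (-1)) *\<^sub>R (X ** matpow X p)"
    by (simp only: matrix_scalar_ac scalar_matrix_assoc[symmetric] scaleR_scaleR)
  finally show ?case by (simp add: power_Suc2)
qed

theorem lemma2:
  fixes A :: "real^'n^'n" and \<beta> :: "real^'n" and H :: "real^'n^'n"
    and k m :: 'n and p :: nat
  assumes offdiag: "\<And>i j. i \<noteq> j \<Longrightarrow> A $ i $ j \<ge> 0"
    and diag0: "\<And>i. A $ i $ i = 0"
    and beta_pos: "\<And>i. \<beta> $ i > 0"
    and H_def: "H = A - diagm (\<chi> i. \<Sum>j\<in>UNIV. A $ i $ j) - diagm \<beta>"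
    and p_pos: "p > 0"
  shows "(even p \<longrightarrow> matpow (matrix_inv H) p $ k $ m \<ge> 0)
    \<and> (odd p \<longrightarrow> matpow (matrix_inv H) p $ k $ m \<le> 0)
    \<and> (matpow (matrix_inv H) p $ k $ m = 0 \<longrightarrow> \<not> reachable A m k)"
proof -
  have nn: "\<And>i j. A $ i $ j \<ge> 0" using offdiag diag0 by (metis order_refl)
  define c where "c i = (\<Sum>j\<in>UNIV. A $ i $ j) + \<beta> $ i" for i
  have cgt: "\<And>i. c i > (\<Sum>j\<in>UNIV. A $ i $ j)" using beta_pos by (simp add: c_def)
  have Hij: "H $ i $ j = A $ i $ j - (if i = j then c i else 0)" for i j
    by (simp add: H_def diagm_def c_def)
  have Hmul: "(H ** X) $ i $ j = (\<Sum>l\<in>UNIV. A $ i $ l * X $ l $ j) - c i * X $ i $ j" for X i j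
  proof -
    have "(H ** X) $ i $ j = (\<Sum>l\<in>UNIV. A $ i $ l * X $ l $ j - (if l = i then c i * X $ i $ j else 0))"
      unfolding matrix_matrix_mult_def by simp (rule sum.cong, auto simp: Hij algebra_simps)
    thus ?thesis by (simp add: sum_subtractf)
  qed
  have Hvec: "(H *v x) $ i = (\<Sum>l\<in>UNIV. A $ i $ l * x $ l) - c i * x $ i" for x i
  proof -
    have "(H *v x) $ i = (\<Sum>l\<in>UNIV. A $ i $ l * x $ l - (if l = i then c i * x $ i else 0))"
      unfolding matrix_vector_mult_def by simp (rule sum.cong, auto simp: Hij algebra_simps)
    thus ?thesis by (simp add: sum_subtractf)
  qed
  have ker: "H *v x = 0 \<Longrightarrow> x = 0" for x
  proof -
    assume H0: "H *v x = 0"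
    have e: "\<And>i. c i * x $ i - (\<Sum>l\<in>UNIV. A $ i $ l * x $ l) = 0"
    proof -
      fix i
      have "(H *v x) $ i = 0" using H0 by simp
      thus "c i * x $ i - (\<Sum>l\<in>UNIV. A $ i $ l * x $ l) = 0" using Hvec[of x i] by linarith
    qed
    have p1: "x $ i \<ge> 0" for i
      by (rule minpos[of A c "\<lambda>i. x $ i", OF nn cgt]) (simp add: e)
    have p2: "- x $ i \<ge> 0" for i
    proof (rule minpos[of A c "\<lambda>i. - x $ i", OF nn cgt])
      fix i
      have "c i * - x $ i - (\<Sum>l\<in>UNIV. A $ i $ l * - x $ l) =
            - (c i * x $ i - (\<Sum>l\<in>UNIV. A $ i $ l * x $ l))"
        by (simp add: sum_negf)
      thus "c i * - x $ i - (\<Sum>l\<in>UNIV. A $ i $ l * - x $ l) \<ge> 0" using e by simp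
    qed
    show "x = 0" using p1 p2 by (simp add: vec_eq_iff) (meson antisym neg_0_le_iff_le)
  qed
  then obtain B where "B ** H = mat 1" using matrix_left_invertible_ker by blast
  hence ex: "\<exists>B. H ** B = mat 1 \<and> B ** H = mat 1" using matrix_left_right_inverse by blast
  have inv: "H ** matrix_inv H = mat 1"
    unfolding matrix_inv_def using someI_ex[OF ex] by blast
  define G where "G = - matrix_inv H"
  have Geq: "c i * G $ i $ m' - (\<Sum>l\<in>UNIV. A $ i $ l * G $ l $ m') = (if i = m' then 1 else 0)"
    for i m'
  proof -
    have "(H ** matrix_inv H) $ i $ m' = (if i = m' then 1 else 0)" using inv by (simp add: mat_def)
    thus ?thesis by (simp add: Hmul G_def sum_negf)
  qed
  have Gnn: "G $ i $ j \<ge> 0" for i j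
    by (rule minpos[of A c "\<lambda>i. G $ i $ j", OF nn cgt]) (simp add: Geq)
  have Gpos_step: "G $ i $ j > 0" if "G $ l $ j > 0" "A $ i $ l > 0" for i j l
  proof -
    have "A $ i $ l * G $ l $ j \<le> (\<Sum>l\<in>UNIV. A $ i $ l * G $ l $ j)"
      by (rule member_le_sum) (auto simp: nn Gnn)
    moreover have "A $ i $ l * G $ l $ j > 0" using that by simp
    moreover have "c i * G $ i $ j \<ge> (\<Sum>l\<in>UNIV. A $ i $ l * G $ l $ j)"
      using Geq[of i j] by (simp split: if_splits)
    moreover have "c i > 0" proof -
      have "0 \<le> (\<Sum>j\<in>UNIV. A $ i $ j)" by (rule sum_nonneg) (simp add: nn)
      thus ?thesis using cgt[of i] by linarith
    qed
    ultimately have "c i * G $ i $ j > 0" by linarith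
    thus ?thesis using \<open>c i > 0\<close> by (simp add: zero_less_mult_iff)
  qed
  have Gdiag: "G $ i $ i > 0" for i
  proof -
    have "(\<Sum>l\<in>UNIV. A $ i $ l * G $ l $ i) \<ge> 0" by (rule sum_nonneg) (simp add: nn Gnn)
    hence "c i * G $ i $ i \<ge> 1" using Geq[of i i] by simp
    hence "c i * G $ i $ i > 0" by linarith
    moreover have "c i > 0" proof -
      have "0 \<le> (\<Sum>j\<in>UNIV. A $ i $ j)" by (rule sum_nonneg) (simp add: nn)
      thus ?thesis using cgt[of i] by linarith
    qed
    ultimately show ?thesis by (simp add: zero_less_mult_iff)
  qed
  have Greach: "G $ k' $ m' > 0" if r: "reachable A m' k'" for k' m'
  proof -
    obtain ws where ws0: "ws \<noteq> [] \<and> hd ws = m' \<and> last ws = k' \<and>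
      (\<forall>t. Suc t < length ws \<longrightarrow> A $ (ws ! Suc t) $ (ws ! t) > 0)"
      using r unfolding reachable_def by blast
    hence ws: "ws \<noteq> []" "hd ws = m'" "last ws = k'"
      "\<And>t. Suc t < length ws \<Longrightarrow> A $ (ws ! Suc t) $ (ws ! t) > 0"
      by auto
    have "\<forall>t < length ws. G $ (ws ! t) $ m' > 0"
    proof (intro allI impI)
      fix t assume "t < length ws"
      thus "G $ (ws ! t) $ m' > 0"
      proof (induction t)
        case 0
        have "ws ! 0 = m'" using ws(1,2) by (simp add: hd_conv_nth)
        thus ?case using Gdiag[of m'] by simp
      next
        case (Suc t)
        have "G $ (ws ! t) $ m' > 0" using Suc by simp
        moreover have "A $ (ws ! Suc t) $ (ws ! t) > 0" using ws(4)[of t] Suc.prems by simp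
        ultimately show ?case by (rule Gpos_step)
      qed
    qed
    moreover have "ws ! (length ws - 1) = k'" using ws(1,3) by (simp add: last_conv_nth)
    moreover have "length ws - 1 < length ws" using ws(1) by simp
    ultimately show ?thesis by metis
  qed
  have Pnn: "matpow G q $ i $ j \<ge> 0" for q i j
  proof (induction q arbitrary: i j)
    case 0 thus ?case by (simp add: mat_def)
  next
    case (Suc q) thus ?case
      by (simp add: matrix_matrix_mult_def Gnn sum_nonneg)
  qed
  have Pdiag: "matpow G q $ i $ i > 0" for q i
  proof (induction q)
    case 0 thus ?case by (simp add: mat_def)
  next
    case (Suc q)
    have "G $ i $ i * matpow G q $ i $ i \<le> (\<Sum>l\<in>UNIV. G $ i $ l * matpow G q $ l $ i)"
      by (rule member_le_sum) (auto simp: Gnn Pnn)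
    moreover have "G $ i $ i * matpow G q $ i $ i > 0" using Gdiag Suc by simp
    ultimately show ?case by (simp add: matrix_matrix_mult_def)
  qed
  obtain q where q: "p = Suc q" using p_pos gr0_conv_Suc by blast
  have Preach: "matpow G p $ k $ m > 0" if "reachable A m k"
  proof -
    have "G $ k $ m * matpow G q $ m $ m \<le> (\<Sum>l\<in>UNIV. G $ k $ l * matpow G q $ l $ m)"
      by (rule member_le_sum) (auto simp: Gnn Pnn)
    moreover have "G $ k $ m * matpow G q $ m $ m > 0" using Greach[OF that] Pdiag by simp
    ultimately show ?thesis by (simp add: q matrix_matrix_mult_def)
  qed
  have MI: "matrix_inv H = - G" by (simp add: G_def)
  have P: "matpow (matrix_inv H) p $ k $ m = (-1)^p * matpow G p $ k $ m"
    by (simp add: MI matpow_neg)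
  show ?thesis
  proof (intro conjI impI)
    assume "even p" thus "matpow (matrix_inv H) p $ k $ m \<ge> 0" using P Pnn by simp
  next
    assume "odd p" thus "matpow (matrix_inv H) p $ k $ m \<le> 0" using P Pnn by simp
  next
    assume "matpow (matrix_inv H) p $ k $ m = 0"
    thus "\<not> reachable A m k" using P Preach by fastforce
  qed
qed

end
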